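(* If there exist complex unit vectors $|\psi\rangle$ and $|v_j\rangle$ ($j\in V$) in $\mathbb{C}^d$ with $\langle v_i|v_j\rangle=0$ whenever $(i,j)\in E$ that attain $\sum_{j\in V} w_j |\langle \psi|v_j\rangle|^2=\vartheta_c(G)$ (a Lovász-optimum orthogonal representation realized in the $d$-dimensional complex Hilbert space), then there exist real unit vectors $|\phi\rangle$ and $|\omega_j\rangle$ ($j\in V$) in $\mathbb{R}^{2d-1}$ with $\langle \omega_i|\omega_j\rangle=0$ whenever $(i,j)\in E$ and $\sum_{j\in V} w_j (\langle \phi|\omega_j\rangle)^2=\vartheta_c(G)$. Consequently $\vartheta_c(G)=\vartheta(G)$, and the Lovász-optimum orthogonal representation of any exclusivity graph can be realized in a real Hilbert space of suitable dimension.
   Context: Let $G=(V,E,W)$ be a (weighted) exclusivity graph with vertex set $V$, edge set $E$ and nonnegative vertex weights $w_j$. The Lovász number is $\vartheta(G)=\max \sum_{j\in V} w_j (\langle \psi|v_j\rangle)^2$, where $|\psi\rangle$ and $|v_j\rangle$, $j\in V$, run over all real unit vectors (of any dimension) such that $\langle v_i|v_j\rangle=0$ whenever vertices $i,j$ are connected. Its complex generalization is $\vartheta_c(G)=\max \sum_{j\in V} w_j |\langle \psi|v_j\rangle|^2$, where $|\psi\rangle$ and $|v_j\rangle$ run over all complex unit vectors such that $\langle v_i|v_j\rangle=0$ whenever vertices $i,j$ are connected. A Lovász-optimum orthogonal representation is a choice of such vectors attaining the maximum. *)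

theory Defs
  imports Complex_Main
begin

text \<open>Vectors of C^n (resp. R^n) are represented by functions nat => complex (resp. real);
  only the coordinates 0..n-1 are used.  Inner product <u|v> = sum_k cnj(u_k) v_k.\<close>

definition cinner_n :: "nat \<Rightarrow> (nat \<Rightarrow> complex) \<Rightarrow> (nat \<Rightarrow> complex) \<Rightarrow> complex" where
  "cinner_n n u v = (\<Sum>k<n. cnj (u k) * v k)"

definition rinner_n :: "nat \<Rightarrow> (nat \<Rightarrow> real) \<Rightarrow> (nat \<Rightarrow> real) \<Rightarrow> real" where
  "rinner_n n u v = (\<Sum>k<n. u k * v k)"

definition exclusivity_graph :: "'a set \<Rightarrow> ('a \<Rightarrow> 'a \<Rightarrow> bool) \<Rightarrow> ('a \<Rightarrow> real) \<Rightarrow> bool" where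
  "exclusivity_graph V E w \<longleftrightarrow> finite V \<and> (\<forall>i j. E i j \<longrightarrow> E j i) \<and> (\<forall>i. \<not> E i i)
     \<and> (\<forall>j\<in>V. 0 \<le> w j)"

definition c_orth_rep :: "nat \<Rightarrow> 'a set \<Rightarrow> ('a \<Rightarrow> 'a \<Rightarrow> bool) \<Rightarrow> (nat \<Rightarrow> complex)
    \<Rightarrow> ('a \<Rightarrow> nat \<Rightarrow> complex) \<Rightarrow> bool" where
  "c_orth_rep n V E psi v \<longleftrightarrow> cinner_n n psi psi = 1 \<and> (\<forall>j\<in>V. cinner_n n (v j) (v j) = 1)
     \<and> (\<forall>i\<in>V. \<forall>j\<in>V. E i j \<longrightarrow> cinner_n n (v i) (v j) = 0)"

definition r_orth_rep :: "nat \<Rightarrow> 'a set \<Rightarrow> ('a \<Rightarrow> 'a \<Rightarrow> bool) \<Rightarrow> (nat \<Rightarrow> real)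
    \<Rightarrow> ('a \<Rightarrow> nat \<Rightarrow> real) \<Rightarrow> bool" where
  "r_orth_rep n V E psi v \<longleftrightarrow> rinner_n n psi psi = 1 \<and> (\<forall>j\<in>V. rinner_n n (v j) (v j) = 1)
     \<and> (\<forall>i\<in>V. \<forall>j\<in>V. E i j \<longrightarrow> rinner_n n (v i) (v j) = 0)"

definition c_value :: "nat \<Rightarrow> 'a set \<Rightarrow> ('a \<Rightarrow> real) \<Rightarrow> (nat \<Rightarrow> complex)
    \<Rightarrow> ('a \<Rightarrow> nat \<Rightarrow> complex) \<Rightarrow> real" where
  "c_value n V w psi v = (\<Sum>j\<in>V. w j * (cmod (cinner_n n psi (v j)))\<^sup>2)"

definition r_value :: "nat \<Rightarrow> 'a set \<Rightarrow> ('a \<Rightarrow> real) \<Rightarrow> (nat \<Rightarrow> real)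
    \<Rightarrow> ('a \<Rightarrow> nat \<Rightarrow> real) \<Rightarrow> real" where
  "r_value n V w psi v = (\<Sum>j\<in>V. w j * (rinner_n n psi (v j))\<^sup>2)"

definition lovasz_theta :: "'a set \<Rightarrow> ('a \<Rightarrow> 'a \<Rightarrow> bool) \<Rightarrow> ('a \<Rightarrow> real) \<Rightarrow> real" where
  "lovasz_theta V E w = Sup {r_value n V w psi v | n psi v. r_orth_rep n V E psi v}"

definition lovasz_theta_c :: "'a set \<Rightarrow> ('a \<Rightarrow> 'a \<Rightarrow> bool) \<Rightarrow> ('a \<Rightarrow> real) \<Rightarrow> real" where
  "lovasz_theta_c V E w = Sup {c_value n V w psi v | n psi v. c_orth_rep n V E psi v}"

end

theory Submission imports Defs begin

lemma sum_split_add: "(\<Sum>k<a+b. f k) = (\<Sum>k<a. f k) + (\<Sum>k<b. f (a+k))"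
  for f :: "nat \<Rightarrow> 'b::comm_monoid_add"
  by (induction b) (auto simp: add.assoc)

definition realify :: "nat \<Rightarrow> (nat \<Rightarrow> complex) \<Rightarrow> nat \<Rightarrow> real" where
  "realify d u k = (if k < d then Re (u k) else Im (u (k - d)))"

lemma rinner_realify: "rinner_n (d+d) (realify d u) (realify d v) = Re (cinner_n d u v)"
  unfolding rinner_n_def cinner_n_def realify_def sum_split_add
  by (simp add: sum.distrib)

lemma rinner_sub_left: "rinner_n n (\<lambda>k. x k - c * a k) y = rinner_n n x y - c * rinner_n n a y"
  by (simp add: rinner_n_def algebra_simps sum_subtractf sum_distrib_left)
lemma rinner_sub_right: "rinner_n n y (\<lambda>k. x k - c * a k) = rinner_n n y x - c * rinner_n n y a"
  by (simp add: rinner_n_def algebra_simps sum_subtractf sum_distrib_left)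
lemma rinner_sub_left': "rinner_n n (\<lambda>k. x k - a k) y = rinner_n n x y - rinner_n n a y"
  by (simp add: rinner_n_def algebra_simps sum_subtractf)
lemma rinner_comm: "rinner_n n x y = rinner_n n y x"
  by (simp add: rinner_n_def mult.commute)
lemma rinner_Suc: "rinner_n (Suc m) x y = rinner_n m x y + x m * y m"
  by (simp add: rinner_n_def)
lemma rinner_e: "rinner_n (Suc m) (\<lambda>k. if k = m then 1 else 0) y = y m"
  by (simp add: rinner_n_def if_distrib cong: if_cong)

lemma reflect:
  fixes U :: "nat \<Rightarrow> real"
  assumes UU: "rinner_n (Suc m) U U = 1"
  shows "\<exists>H. (\<forall>x y. rinner_n (Suc m) (H x) (H y) = rinner_n (Suc m) x y)
           \<and> (\<forall>x. rinner_n (Suc m) U x = 0 \<longrightarrow> H x m = 0)"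
proof -
  define e :: "nat \<Rightarrow> real" where "e = (\<lambda>k. if k = m then 1 else 0)"
  define a where "a = (\<lambda>k. U k - e k)"
  define H where "H = (\<lambda>x k. x k - (2 * rinner_n (Suc m) a x / rinner_n (Suc m) a a) * a k)"
  have ey: "rinner_n (Suc m) e y = y m" for y unfolding e_def by (rule rinner_e)
  have ay: "rinner_n (Suc m) a y = rinner_n (Suc m) U y - y m" for y
    unfolding a_def rinner_sub_left' ey ..
  have aa: "rinner_n (Suc m) a a = 2 - 2 * U m"
  proof -
    have "rinner_n (Suc m) U a = rinner_n (Suc m) a U" by (rule rinner_comm)
    also have "\<dots> = 1 - U m" using ay[of U] UU by simp
    finally have "rinner_n (Suc m) U a = 1 - U m" .
    moreover have "a m = U m - 1" by (simp add: a_def e_def)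
    ultimately show ?thesis using ay[of a] by simp
  qed
  have iso: "rinner_n (Suc m) (H x) (H y) = rinner_n (Suc m) x y" for x y
  proof (cases "rinner_n (Suc m) a a = 0")
    case True then show ?thesis by (simp add: H_def)
  next
    case False
    have alg: "(xy - (2 * ay / aa) * xa) - (2 * xa / aa) * (ay - (2 * ay / aa) * aa) = xy"
      if "aa \<noteq> 0" for xy ay aa xa :: real using that by (simp add: field_simps)
    show ?thesis unfolding H_def rinner_sub_left rinner_sub_right
      using alg[OF False, of "rinner_n (Suc m) x y" "rinner_n (Suc m) a y" "rinner_n (Suc m) a x"]
      by (simp add: rinner_comm[of _ x a])
  qed
  have last: "H x m = 0" if "rinner_n (Suc m) U x = 0" for x
  proof (cases "rinner_n (Suc m) a a = 0")
    case True
    have "\<forall>k\<in>{..<Suc m}. a k * a k = 0"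
      using True unfolding rinner_n_def by (subst sum_nonneg_eq_0_iff[symmetric]) auto
    hence "rinner_n (Suc m) a x = 0" unfolding rinner_n_def by simp
    then show ?thesis using ay[of x] that True by (simp add: H_def)
  next
    case False
    hence "U m \<noteq> 1" using aa by simp
    have am: "a m = U m - 1" by (simp add: a_def e_def)
    have ax: "rinner_n (Suc m) a x = - x m" using ay[of x] that by simp
    have "H x m = x m - (2 * (- x m) / (2 - 2 * U m)) * (U m - 1)"
      unfolding H_def ax aa am ..
    also have "\<dots> = 0" using \<open>U m \<noteq> 1\<close> by (simp add: field_simps)
    finally show ?thesis .
  qed
  show ?thesis using iso last by blast
qed


lemma cinner_scale: "cinner_n n (\<lambda>k. a * u k) (\<lambda>k. b * v k) = cnj a * b * cinner_n n u v"
  by (simp add: cinner_n_def sum_distrib_left algebra_simps)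
lemma cinner_scale_right: "cinner_n n u (\<lambda>k. b * v k) = b * cinner_n n u v"
  by (simp add: cinner_n_def sum_distrib_left algebra_simps)
lemma cinner_scale_left: "cinner_n n (\<lambda>k. a * u k) v = cnj a * cinner_n n u v"
  by (simp add: cinner_n_def sum_distrib_left algebra_simps)
lemma cinner_sub_left: "cinner_n n (\<lambda>k. x k - y k) v = cinner_n n x v - cinner_n n y v"
  by (simp add: cinner_n_def algebra_simps sum_subtractf)
lemma cinner_sub_right: "cinner_n n v (\<lambda>k. x k - y k) = cinner_n n v x - cinner_n n v y"
  by (simp add: cinner_n_def algebra_simps sum_subtractf)
lemma cinner_cnj: "cinner_n n v u = cnj (cinner_n n u v)"
  by (simp add: cinner_n_def mult.commute)
lemma cinner_self_nonneg: "0 \<le> Re (cinner_n n x x)"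
  by (simp add: cinner_n_def sum_nonneg)
lemma cinner_of_real:
  "cinner_n n (\<lambda>k. complex_of_real (f k)) (\<lambda>k. complex_of_real (g k)) = of_real (rinner_n n f g)"
  by (simp add: cinner_n_def rinner_n_def)

lemma cinner_CS:
  assumes "cinner_n n u u = 1" "cinner_n n v v = 1"
  shows "(cmod (cinner_n n u v))\<^sup>2 \<le> 1"
proof -
  define c where "c = cinner_n n u v"
  define x where "x = (\<lambda>k. v k - c * u k)"
  have "cinner_n n x x = cinner_n n v v - c * cinner_n n v u - cnj c * cinner_n n u v
      + cnj c * c * cinner_n n u u"
    unfolding x_def cinner_sub_left cinner_sub_right cinner_scale cinner_scale_left cinner_scale_right
    by (simp add: algebra_simps)
  also have "\<dots> = 1 - cnj c * c"
    using assms by (simp add: cinner_cnj[of n v u] c_def)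
  also have "cnj c * c = of_real ((cmod c)\<^sup>2)" using complex_norm_square[of c] by (simp add: mult.commute)
  finally have "Re (cinner_n n x x) = 1 - (cmod c)\<^sup>2" by simp
  with cinner_self_nonneg[of n x] show ?thesis unfolding c_def by simp
qed


theorem mainTheorem1:
  fixes V :: "'a set" and E :: "'a \<Rightarrow> 'a \<Rightarrow> bool" and w :: "'a \<Rightarrow> real"
    and d :: nat and psi :: "nat \<Rightarrow> complex" and v :: "'a \<Rightarrow> nat \<Rightarrow> complex"
  assumes "exclusivity_graph V E w"
    and "c_orth_rep d V E psi v"
    and "c_value d V w psi v = lovasz_theta_c V E w"
  shows "(\<exists>phi omega. r_orth_rep (2 * d - 1) V E phi omega
            \<and> r_value (2 * d - 1) V w phi omega = lovasz_theta_c V E w)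
         \<and> lovasz_theta_c V E w = lovasz_theta V E w"
proof -
  from assms(1) have fin: "finite V" and wnn: "\<forall>j\<in>V. 0 \<le> w j"
    unfolding exclusivity_graph_def by auto
  from assms(2) have pp: "cinner_n d psi psi = 1" and vv: "\<forall>j\<in>V. cinner_n d (v j) (v j) = 1"
    and orth: "\<forall>i\<in>V. \<forall>j\<in>V. E i j \<longrightarrow> cinner_n d (v i) (v j) = 0"
    unfolding c_orth_rep_def by auto
  have "d \<noteq> 0"
  proof
    assume "d = 0" then show False using pp by (simp add: cinner_n_def)
  qed
  define M where "M = 2 * d - 1"
  have dd: "d + d = Suc M" using \<open>d \<noteq> 0\<close> by (simp add: M_def)
  define c where "c j = cinner_n d psi (v j)" for j
  define \<alpha> where "\<alpha> j = (if c j = 0 then 1 else cnj (c j) / of_real (cmod (c j)))" for j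
  define v' where "v' j = (\<lambda>k. \<alpha> j * v j k)" for j
  have n\<alpha>: "cmod (\<alpha> j) = 1" for j by (simp add: \<alpha>_def norm_divide)
  have \<alpha>1: "cnj (\<alpha> j) * \<alpha> j = 1" for j
    using complex_norm_square[of "\<alpha> j"] n\<alpha>[of j] by (simp add: mult.commute)
  have cpsi: "cinner_n d psi (v' j) = of_real (cmod (c j))" for j
  proof (cases "c j = 0")
    case True then show ?thesis by (simp add: v'_def cinner_scale_right c_def[symmetric])
  next
    case False
    have "cinner_n d psi (v' j) = cnj (c j) * c j / of_real (cmod (c j))"
      using False unfolding v'_def cinner_scale_right c_def[symmetric] by (simp add: \<alpha>_def)
    also have "cnj (c j) * c j = of_real (cmod (c j)) * of_real (cmod (c j))"
      using complex_norm_square[of "c j"] by (simp add: mult.commute power2_eq_square)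
    finally show ?thesis using False by simp
  qed
  have v'v': "cinner_n d (v' j) (v' j) = 1" if "j \<in> V" for j
    using vv that \<alpha>1 by (simp add: v'_def cinner_scale)
  have orth': "cinner_n d (v' i) (v' j) = 0" if "i \<in> V" "j \<in> V" "E i j" for i j
    using orth that by (simp add: v'_def cinner_scale)
  define ipsi where "ipsi = (\<lambda>k. \<i> * psi k)"
  define Psi where "Psi = realify d psi"
  define W where "W j = realify d (v' j)" for j
  define U where "U = realify d ipsi"
  have UU: "rinner_n (Suc M) U U = 1"
    unfolding U_def dd[symmetric] rinner_realify ipsi_def cinner_scale pp by simp
  have UPsi: "rinner_n (Suc M) U Psi = 0"
    unfolding U_def Psi_def dd[symmetric] rinner_realify ipsi_def cinner_scale_left pp by simp
  have UW: "rinner_n (Suc M) U (W j) = 0" for j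
    unfolding U_def W_def dd[symmetric] rinner_realify ipsi_def cinner_scale_left cpsi by simp
  have PsiPsi: "rinner_n (Suc M) Psi Psi = 1"
    unfolding Psi_def dd[symmetric] rinner_realify pp by simp
  have WW: "rinner_n (Suc M) (W j) (W j) = 1" if "j \<in> V" for j
    unfolding W_def dd[symmetric] rinner_realify v'v'[OF that] by simp
  have Worth: "rinner_n (Suc M) (W i) (W j) = 0" if "i \<in> V" "j \<in> V" "E i j" for i j
    unfolding W_def dd[symmetric] rinner_realify orth'[OF that] by simp
  have PsiW: "rinner_n (Suc M) Psi (W j) = cmod (c j)" for j
    unfolding W_def Psi_def dd[symmetric] rinner_realify cpsi by simp
  obtain H where Hiso: "\<And>x y. rinner_n (Suc M) (H x) (H y) = rinner_n (Suc M) x y"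
    and Hlast: "\<And>x. rinner_n (Suc M) U x = 0 \<Longrightarrow> H x M = 0"
    using reflect[OF UU] by blast
  have key: "rinner_n M (H x) (H y) = rinner_n (Suc M) x y"
    if "rinner_n (Suc M) U x = 0" "rinner_n (Suc M) U y = 0" for x y
    using Hiso[of x y] Hlast[OF that(1)] Hlast[OF that(2)] by (simp add: rinner_Suc)
  define phi where "phi = H Psi"
  define omega where "omega j = H (W j)" for j
  have rep: "r_orth_rep M V E phi omega"
    unfolding r_orth_rep_def phi_def omega_def
    using key UPsi UW PsiPsi WW Worth by simp
  have val: "r_value M V w phi omega = c_value d V w psi v"
    unfolding r_value_def c_value_def phi_def omega_def
    using key[OF UPsi UW] PsiW by (simp add: c_def)
  have part1: "\<exists>phi omega. r_orth_rep (2 * d - 1) V E phi omega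
            \<and> r_value (2 * d - 1) V w phi omega = lovasz_theta_c V E w"
    using rep val assms(3) unfolding M_def by (intro exI[of _ phi] exI[of _ omega]) simp
  define Sc where "Sc = {c_value n V w psi v | n psi v. c_orth_rep n V E psi v}"
  define Sr where "Sr = {r_value n V w psi v | n psi v. r_orth_rep n V E psi v}"
  have bdd: "bdd_above Sc"
  proof (rule bdd_aboveI)
    fix x assume "x \<in> Sc"
    then obtain n ps vs where x: "x = c_value n V w ps vs" and r: "c_orth_rep n V E ps vs"
      unfolding Sc_def by blast
    have "x \<le> (\<Sum>j\<in>V. w j)" unfolding x c_value_def
    proof (rule sum_mono)
      fix j assume "j \<in> V"
      then have "(cmod (cinner_n n ps (vs j)))\<^sup>2 \<le> 1"
        using r cinner_CS unfolding c_orth_rep_def by blast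
      then show "w j * (cmod (cinner_n n ps (vs j)))\<^sup>2 \<le> w j"
        using wnn \<open>j \<in> V\<close> by (simp add: mult_left_le)
    qed
    then show "x \<le> (\<Sum>j\<in>V. w j)" .
  qed
  have sub: "Sr \<subseteq> Sc"
  proof
    fix x assume "x \<in> Sr"
    then obtain n ps vs where x: "x = r_value n V w ps vs" and r: "r_orth_rep n V E ps vs"
      unfolding Sr_def by blast
    let ?ps = "\<lambda>k. complex_of_real (ps k)"
    let ?vs = "\<lambda>j k. complex_of_real (vs j k)"
    have "c_orth_rep n V E ?ps ?vs" using r
      unfolding c_orth_rep_def r_orth_rep_def cinner_of_real by simp
    moreover have "c_value n V w ?ps ?vs = x"
      unfolding x c_value_def r_value_def cinner_of_real by simp
    ultimately show "x \<in> Sc" unfolding Sc_def by blast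
  qed
  have mem: "lovasz_theta_c V E w \<in> Sr"
    using rep val assms(3) unfolding Sr_def mem_Collect_eq
    by (intro exI[of _ M] exI[of _ phi] exI[of _ omega]) simp
  have "Sup Sr \<le> Sup Sc" using cSup_subset_mono[OF _ bdd sub] mem by blast
  moreover have "lovasz_theta_c V E w \<le> Sup Sr"
    using cSup_upper[OF mem bdd_above_mono[OF bdd sub]] .
  ultimately have "lovasz_theta_c V E w = lovasz_theta V E w"
    unfolding lovasz_theta_def lovasz_theta_c_def Sr_def Sc_def by linarith
  with part1 show ?thesis by blast
qed

end
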